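(* Let $d\geq1$ be an integer and, for real $n>d/2$ and $u\in[0,+\infty)$, let $$\mathscr B_{nd}(u):=(1+4u)^n\int_0^{1/4}ds\,\frac{s^{n-1}}{\sqrt{1-s}\,(1+us)^{2n-d/2}},\qquad B_{nd}:=\sup_{u\in[0,+\infty)}\mathscr B_{nd}(u).$$ Then, for fixed $d$ and $n\to+\infty$, $B_{nd}=O\big(n^{-1/2}(9/8)^n\big)$. *)

theory Defs
  imports "HOL-Analysis.Analysis" "HOL-Library.Landau_Symbols"
begin

definition calB :: "real \<Rightarrow> nat \<Rightarrow> real \<Rightarrow> real" where
  "calB n d u = (1 + 4 * u) powr n *
     integral {0..1/4} (\<lambda>t. t powr (n - 1) /
        (sqrt (1 - t) * ((1 + u * t) powr (2 * n - real d / 2))))"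

definition Bnd :: "real \<Rightarrow> nat \<Rightarrow> real" where
  "Bnd n d = (SUP u\<in>{0..}. calB n d u)"

end

theory Submission imports Defs "HOL-Real_Asymp.Real_Asymp" begin

lemma h_bound:
  fixes u s :: real assumes "0 \<le> u" "0 \<le> s" "s \<le> 1/4"
  shows "(1+4*u)* s \<le> (16/15)*(1+u * s)^2"
proof -
  have "(1+4*u)* s*(4-s) \<le> 4*(1+u * s)^2"
  proof -
    have "4*(1+u * s)^2 - (1+4*u)* s*(4-s) = (2 - s - 2*u * s)^2" by (simp add: power2_eq_square algebra_simps)
    thus ?thesis by (metis diff_ge_0_iff_ge zero_le_power2)
  qed
  moreover have "4*(1+u * s)^2 \<le> (16/15)*(1+u * s)^2 * (4-s)"
  proof -
    have "4 \<le> 16/15*(4-s)" using assms by simp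
    from mult_right_mono[OF this, of "(1+u * s)^2"] show ?thesis by (simp add: algebra_simps)
  qed
  moreover have "(1+4*u)* s*(4-s) = ((1+4*u)* s)*(4-s)" by simp
  ultimately have "((1+4*u)* s)*(4-s) \<le> ((16/15)*(1+u * s)^2) * (4-s)" by linarith
  thus ?thesis using assms by (simp add: mult_le_cancel_right)
qed

lemma key_pt:
  fixes n u s :: real and d :: nat
  assumes n: "real (d+2) \<le> n" and u: "0 \<le> u" and s: "0 \<le> s" "s \<le> 1/4"
  shows "(1+4*u) powr n * (s powr (n-1) / (sqrt(1-s) * (1+u * s) powr (2*n - real d/2)))
     \<le> 2*5^(d+2)*(16/15) powr (n - real(d+2)) * ((1+u)/(1+u * s)^2)"
proof (cases "s = 0")
  case True thus ?thesis using u by simp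
next
  case False
  hence s0: "0 < s" using s by simp
  define m where "m = d+2"
  define a where "a = 1+4*u"
  define b where "b = 1+u * s"
  have a0: "a > 0" "a \<ge> 1" using u by (auto simp: a_def)
  have b1: "b \<ge> 1" using u s by (auto simp: b_def)
  hence b0: "b > 0" by simp
  define h where "h = a* s/b^2"
  have h0: "0 \<le> h" using a0 b0 s0 by (simp add: h_def)
  have h1: "h \<le> 16/15" using h_bound[OF u s] b0 by (simp add: h_def a_def b_def divide_simps)
  have m1: "real (m - Suc 0) = real m - 1" by (simp add: m_def)
  have eq: "a powr n * s powr (n-1) / b powr (2*n - real d/2)
      = h powr (n - m) * (a powr m * s powr (m-1) / b powr (2*m - real d/2))"
    using a0 b0 s0 h0 unfolding h_def
    using m1 by (simp add: powr_def ln_mult ln_div ln_realpow flip: exp_add exp_diff) (simp add: algebra_simps)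
  have Q1: "a powr m * s powr (m-1) = a * (a* s)^(m-1)"
  proof -
    have "a powr m = a^m" using a0 by (simp add: powr_realpow)
    moreover have "s powr real (m-1) = s^(m-1)" using s0 by (simp add: powr_realpow)
    moreover have "a^m = a * a^(m-1)" by (simp add: m_def)
    ultimately show ?thesis by (simp add: power_mult_distrib)
  qed
  have Q2: "a * (a* s)^(m-1) \<le> (5*(1+u)) * (5*b)^(m-1)"
  proof (rule mult_mono)
    show "a \<le> 5*(1+u)" using u by (simp add: a_def)
    show "(a* s)^(m-1) \<le> (5*b)^(m-1)"
    proof (rule power_mono)
      have "0 \<le> u * s" using u s by simp
      moreover have "a * s = s + 4*(u * s)" "5*b = 5 + 5*(u * s)" by (simp_all add: a_def b_def algebra_simps)
      ultimately show "a * s \<le> 5*b" using s by linarith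
    qed (use a0 s0 in simp)
  qed (use a0 s0 u in auto)
  have Q3: "b powr (m+1) \<le> b powr (2*m - real d/2)"
    using b1 by (intro powr_mono) (auto simp: m_def)
  have Q4: "b powr (m+1) = b^(m+1)" using b0 by (metis of_nat_1 of_nat_add powr_realpow)
  have Q: "a powr m * s powr (m-1) / b powr (2*m - real d/2) \<le> 5^m*(1+u)/b^2"
  proof -
    have "a powr m * s powr (m-1) / b powr (2*m - real d/2) \<le> (5*(1+u)) * (5*b)^(m-1) / b^(m+1)"
      using Q1 Q2 Q3 Q4 b0 a0 s0 u
      by (intro frac_le) auto
    also have "\<dots> = 5^m*(1+u)/b^2"
      using b0 by (simp add: m_def power_mult_distrib field_simps power2_eq_square)
    finally show ?thesis .
  qed
  have H: "h powr (n - m) \<le> (16/15) powr (n - m)"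
    using h0 h1 n by (intro powr_mono2) (auto simp: m_def)
  have S: "1 / sqrt (1-s) \<le> 2"
  proof -
    have "1/2 \<le> sqrt (1-s)" using s by (intro real_le_rsqrt) (auto simp: power2_eq_square)
    thus ?thesis using s by (simp add: divide_simps)
  qed
  have "(1+4*u) powr n * (s powr (n-1) / (sqrt(1-s) * (1+u * s) powr (2*n - real d/2)))
      = (1/sqrt(1-s)) * (h powr (n - m) * (a powr m * s powr (m-1) / b powr (2*m - real d/2)))"
  proof -
    have "sqrt (1-s) > 0" using s by simp
    hence "(1+4*u) powr n * (s powr (n-1) / (sqrt(1-s) * (1+u * s) powr (2*n - real d/2)))
      = (1/sqrt(1-s)) * (a powr n * s powr (n-1) / b powr (2*n - real d/2))"
      by (simp add: a_def b_def)
    thus ?thesis using eq by simp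
  qed
  also have "\<dots> \<le> 2 * ((16/15) powr (n - m) * (5^m*(1+u)/b^2))"
    using S H Q h0 a0 b0 s0 s
    by (intro mult_mono) (auto intro!: mult_nonneg_nonneg divide_nonneg_nonneg)
  also have "\<dots> = 2*5^(d+2)*(16/15) powr (n - real(d+2)) * ((1+u)/(1+u * s)^2)"
    by (simp add: m_def b_def)
  finally show ?thesis .
qed

lemma w_int:
  fixes u :: real assumes u: "0 \<le> u"
  shows "((\<lambda>s. (1+u)/(1+u * s)^2) has_integral ((1+u)/(4+u))) {0..1/4}"
proof -
  have "((\<lambda>s. (1+u)/(1+u * s)^2) has_integral ((\<lambda>s. (1+u)* s/(1+u * s)) (1/4) - (\<lambda>s. (1+u)* s/(1+u * s)) 0)) {0..1/4}"
  proof (rule fundamental_theorem_of_calculus)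
    fix x :: real assume x: "x \<in> {0..1/4}"
    hence pos: "1 + u * x > 0" using u by (simp add: add_pos_nonneg)
    have "((\<lambda>s. (1+u)* s/(1+u * s)) has_real_derivative (1+u)/(1+u * x)^2) (at x within {0..1/4})"
      using pos by (auto intro!: derivative_eq_intros simp: field_simps power2_eq_square)
    thus "((\<lambda>s. (1+u)* s/(1+u * s)) has_vector_derivative (1+u)/(1+u * x)^2) (at x within {0..1/4})"
      by (simp add: has_real_derivative_iff_has_vector_derivative)
  qed simp
  moreover have "(\<lambda>s. (1+u)* s/(1+u * s)) (1/4) - (\<lambda>s. (1+u)* s/(1+u * s)) 0 = (1+u)/(4+u)"
    using u by (simp add: field_simps)
  ultimately show ?thesis by simp
qed

lemma calB_bound:
  fixes n u :: real and d :: nat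
  assumes n: "real (d+2) \<le> n" and u: "0 \<le> u"
  shows "calB n d u \<le> 2*5^(d+2)*(16/15) powr (n - real(d+2))"
    and "0 \<le> calB n d u"
proof -
  define C where "C = 2*5^(d+2)*(16/15) powr (n - real(d+2))"
  define A where "A = (1+4*u) powr n"
  define f where "f = (\<lambda>t::real. t powr (n - 1) /
        (sqrt (1 - t) * ((1 + u * t) powr (2 * n - real d / 2))))"
  have A0: "A > 0" using u by (simp add: A_def)
  have C0: "C \<ge> 0" by (simp add: C_def)
  have fnn: "0 \<le> f s" if "s \<in> {0..1/4}" for s
    using that unfolding f_def by (intro divide_nonneg_nonneg mult_nonneg_nonneg) auto
  have cal: "calB n d u = A * integral {0..1/4} f" by (simp add: calB_def A_def f_def)
  have gi: "((\<lambda>s. (C/A) * ((1+u)/(1+u * s)^2)) has_integral ((C/A) * ((1+u)/(4+u)))) {0..1/4}"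
    by (intro has_integral_mult_right w_int u)
  have fle: "f s \<le> (C/A) * ((1+u)/(1+u * s)^2)" if "s \<in> {0..1/4}" for s
  proof -
    have "A * f s \<le> C * ((1+u)/(1+u * s)^2)"
      using key_pt[OF n u, of s] that by (simp add: A_def f_def C_def)
    hence "f s \<le> C * ((1+u)/(1+u * s)^2) / A" by (simp only: pos_le_divide_eq[OF A0] mult.commute)
    thus ?thesis by (simp add: ac_simps)
  qed
  have "integral {0..1/4} f \<le> (C/A) * ((1+u)/(4+u))"
  proof (cases "f integrable_on {0..1/4}")
    case True
    then show ?thesis using has_integral_le[OF integrable_integral[OF True] gi] fle by blast
  next
    case False
    then show ?thesis using A0 C0 u by (simp add: not_integrable_integral)
  qed
  also have "\<dots> \<le> C/A" using A0 C0 u by (intro mult_left_le) (auto simp: field_simps)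
  finally have "A * integral {0..1/4} f \<le> C" using A0 by (simp add: field_simps)
  thus "calB n d u \<le> 2*5^(d+2)*(16/15) powr (n - real(d+2))" using cal C_def by simp
  have "0 \<le> integral {0..1/4} f"
  proof (cases "f integrable_on {0..1/4}")
    case True
    then show ?thesis using integral_nonneg[OF True] fnn by blast
  qed (simp add: not_integrable_integral)
  thus "0 \<le> calB n d u" using cal A0 by simp
qed

theorem lemma4p3:
  fixes d :: nat
  assumes "d \<ge> 1"
  shows "(\<forall>\<^sub>F n in at_top. bdd_above (calB n d ` {0..}))
       \<and> (\<lambda>n. Bnd n d) \<in> O[at_top](\<lambda>n. n powr (-1/2) * (9/8) powr n)"
proof -
  define K :: real where "K = 2*5^(d+2)*(16/15) powr (- real(d+2))"
  have ev: "\<forall>\<^sub>F n in at_top. real (d+2) \<le> (n::real)" by (rule eventually_ge_at_top)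
  have bnd: "calB n d u \<le> K * (16/15) powr n" if "real (d+2) \<le> n" "0 \<le> u" for n u
  proof -
    have "(16/15::real) powr (n - real(d+2)) = (16/15) powr (-real(d+2)) * (16/15) powr n"
    proof -
      have e: "n - real(d+2) = -real(d+2) + n" by simp
      show ?thesis by (simp only: e powr_add)
    qed
    thus ?thesis using calB_bound(1)[OF that] by (simp add: K_def mult.assoc)
  qed
  have bdd: "bdd_above (calB n d ` {0..})" if "real (d+2) \<le> n" for n
    using bnd[OF that] by (intro bdd_aboveI[where M="K * (16/15) powr n"]) auto
  have 1: "\<forall>\<^sub>F n in at_top. bdd_above (calB n d ` {0..})"
    using ev by eventually_elim (use bdd in auto)
  have Bb: "norm (Bnd n d) \<le> 1 * norm (K * (16/15) powr n)" if "real (d+2) \<le> n" for n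
  proof -
    have "Bnd n d \<le> K * (16/15) powr n" unfolding Bnd_def
      using bnd[OF that] by (intro cSUP_least) auto
    moreover have "0 \<le> Bnd n d" unfolding Bnd_def
      using calB_bound(2)[OF that, of 0] bdd[OF that]
      by (intro order_trans[OF _ cSUP_upper[of 0]]) auto
    moreover have "K \<ge> 0" by (simp add: K_def)
    ultimately show ?thesis by simp
  qed
  have "(\<lambda>n. Bnd n d) \<in> O[at_top](\<lambda>n. K * (16/15) powr n)"
  proof -
    have "\<forall>\<^sub>F n in at_top. norm (Bnd n d) \<le> 1 * norm (K * (16/15) powr n)"
      using ev by eventually_elim (rule Bb)
    thus ?thesis by (rule bigoI)
  qed
  also have "(\<lambda>n::real. K * (16/15) powr n) \<in> O[at_top](\<lambda>n. n powr (-1/2) * (9/8) powr n)"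
    by real_asymp
  finally show ?thesis using 1 by blast
qed
end
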